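(* Let $2\le k<\omega$ and let $\kappa$ be a cardinal with $\kappa\le 2^{\aleph_0}\le\kappa^{+(k-2)}$. Then there are $d$ with $1\le d<\omega$ and a $d$-dimensional $k$-template $P$ such that $\chi(L(\mathbb R^d,P))=\kappa$.
   Context: A $d$-dimensional $k$-template is a set $P$ of $d$-tuples with $|P|=k$. If $P,Q$ are $d$-dimensional templates, $Q$ is a homomorphic image of $P$ if there is a surjection $f:P\to Q$ such that for all $x,y\in P$ and $i<d$, $x_i=y_i$ implies $f(x)_i=f(y)_i$. $L(\mathbb R^d,P)$ is the $k$-hypergraph with vertex set $\mathbb R^d$ whose edges are the $k$-templates contained in $\mathbb R^d$ that are homomorphic images of $P$. $\chi$ is chromatic number (least cardinal number of colors in a vertex coloring not constant on any edge). $\kappa^+$ is the successor cardinal, $\kappa^{+0}=\kappa$, $\kappa^{+(n+1)}=(\kappa^{+n})^+$. *)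

theory Defs
  imports Complex_Main
begin

unbundle cardinal_syntax

text \<open>d-tuples of reals are represented as real lists of length d; d-tuples over an
  arbitrary type 'a as 'a lists of length d.\<close>

definition template :: "nat \<Rightarrow> nat \<Rightarrow> 'a list set \<Rightarrow> bool" where
  "template d k P \<longleftrightarrow> finite P \<and> card P = k \<and> (\<forall>x\<in>P. length x = d)"

definition hom_image :: "nat \<Rightarrow> 'a list set \<Rightarrow> 'b list set \<Rightarrow> bool" where
  "hom_image d P Q \<longleftrightarrow>
     (\<exists>f. f ` P = Q \<and>
          (\<forall>x\<in>P. \<forall>y\<in>P. \<forall>i<d. x ! i = y ! i \<longrightarrow> f x ! i = f y ! i))"

definition Rd :: "nat \<Rightarrow> real list set" where
  "Rd d = {x. length x = d}"

definition L_edges :: "nat \<Rightarrow> 'a list set \<Rightarrow> real list set set" where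
  "L_edges d P = {Q. Q \<subseteq> Rd d \<and> template d (card P) Q \<and> hom_image d P Q}"

text \<open>A vertex colouring not constant on any edge.  Colours are taken from the vertex
  type itself; this is no loss, since the image of any colouring of V injects into V.\<close>
definition proper_colouring :: "'v set \<Rightarrow> 'v set set \<Rightarrow> ('v \<Rightarrow> 'c) \<Rightarrow> bool" where
  "proper_colouring V E c \<longleftrightarrow> (\<forall>e\<in>E. \<exists>x\<in>e. \<exists>y\<in>e. c x \<noteq> c y)"

definition chromatic_number_is :: "'v set \<Rightarrow> 'v set set \<Rightarrow> 'a rel \<Rightarrow> bool" where
  "chromatic_number_is V E r \<longleftrightarrow>
     (\<exists>c :: 'v \<Rightarrow> 'v. proper_colouring V E c \<and> r =o (card_of (c ` V))) \<and>
     (\<forall>c :: 'v \<Rightarrow> 'v. proper_colouring V E c \<longrightarrow> r \<le>o (card_of (c ` V)))"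

fun succ_iter_real :: "'a rel \<Rightarrow> nat \<Rightarrow> real set \<Rightarrow> bool" where
  "succ_iter_real r 0 B \<longleftrightarrow> card_of B =o r"
| "succ_iter_real r (Suc n) B \<longleftrightarrow> (\<exists>B'. succ_iter_real r n B' \<and> card_of B =o cardSuc (card_of B'))"

text \<open>continuum_le_succ_iter r n  expresses  2^aleph_0 \<le> r^{+n}.  Since
  r^{+m} \<ge> 2^aleph_0 for some m \<le> n iff r^{+n} \<ge> 2^aleph_0, and for the least such m
  (when r \<le> 2^aleph_0) all of r, ..., r^{+m} are \<le> 2^aleph_0 and hence realised by sets of
  reals, this is an exact rendering for cardinals r \<le> 2^aleph_0.\<close>
definition continuum_le_succ_iter :: "'a rel \<Rightarrow> nat \<Rightarrow> bool" where
  "continuum_le_succ_iter r n \<longleftrightarrow>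
     (\<exists>m\<le>n. \<exists>B. succ_iter_real r m B \<and> card_of (UNIV :: real set) \<le>o card_of B)"

end

theory Submission
  imports Defs
begin

unbundle cardinal_syntax



definition DD :: "'b set \<Rightarrow> nat \<Rightarrow> 'b list set" where
  "DD A n = {x. length x = n \<and> set x \<subseteq> A}"

definition line :: "nat \<Rightarrow> 'b list \<Rightarrow> 'b list set" where
  "line i x = {y. length y = length x \<and> (\<forall>j<length x. j \<noteq> i \<longrightarrow> y!j = x!j)}"

lemma line_self[simp]: "x \<in> line i x" by (simp add: line_def)

lemma line_sym: "y \<in> line i x \<Longrightarrow> x \<in> line i y"
  by (auto simp: line_def)

lemma line_eq: "y \<in> line i x \<Longrightarrow> line i y = line i x"
  by (auto simp: line_def)

lemma siter_iso: assumes "succ_iter_real r n B" "|B| =o |X|" shows "succ_iter_real r n X"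
proof (cases n)
  case 0
  then show ?thesis using assms by (auto intro: ordIso_transitive ordIso_symmetric)
next
  case (Suc m)
  then obtain B' where "succ_iter_real r m B'" "|B| =o cardSuc |B'|" using assms by auto
  moreover have "|X| =o cardSuc |B'|" using calculation assms ordIso_transitive ordIso_symmetric by blast
  ultimately show ?thesis using Suc by auto
qed

lemma siter_ge: "Card_order r \<Longrightarrow> succ_iter_real r n B \<Longrightarrow> r \<le>o |B|"
proof (induction n arbitrary: B)
  case 0
  then show ?case by (auto intro: ordIso_imp_ordLeq ordIso_symmetric)
next
  case (Suc n)
  then obtain B' where B': "succ_iter_real r n B'" "|B| =o cardSuc |B'|" by auto
  have "r \<le>o |B'|" using Suc B' by auto
  also have "|B'| \<le>o cardSuc |B'|"
    using cardSuc_greater[OF card_of_Card_order] ordLess_imp_ordLeq by blast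
  also have "cardSuc |B'| \<le>o |B|" using B' ordIso_imp_ordLeq ordIso_symmetric by blast
  finally show ?case .
qed

lemma iso_fin: "Card_order r \<Longrightarrow> |B| =o r \<Longrightarrow> finite B = finite (Field r)"
  using card_of_Field_ordIso[of r] card_of_ordIso_finite ordIso_transitive ordIso_symmetric by metis

lemma siter_finite: "Card_order r \<Longrightarrow> finite (Field r) \<Longrightarrow> succ_iter_real r n B \<Longrightarrow> finite B"
proof (induction n arbitrary: B)
  case 0
  then show ?case using iso_fin by auto
next
  case (Suc n)
  then obtain B' where B': "succ_iter_real r n B'" "|B| =o cardSuc |B'|" by auto
  have "finite B'" using Suc B' by auto
  hence "finite (Field (cardSuc |B'| ))" using cardSuc_finite[OF card_of_Card_order[of B']] unfolding Field_card_of by blast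
  then show ?case using B' iso_fin[OF cardSuc_Card_order[OF card_of_Card_order]] by blast
qed

lemma DD_card: assumes "\<not> finite A" shows "|DD A n| \<le>o |A|"
proof (induction n)
  case 0
  have "DD A 0 = {[]}" by (auto simp: DD_def)
  moreover have "A \<noteq> {}" using assms by auto
  ultimately show ?case using card_of_singl_ordLeq by metis
next
  case (Suc n)
  have ne: "DD A n \<noteq> {}"
  proof -
    obtain a where "a \<in> A" using assms by (metis ex_in_conv finite.emptyI)
    hence "replicate n a \<in> DD A n" by (auto simp: DD_def)
    thus ?thesis by auto
  qed
  have "DD A (Suc n) \<subseteq> (\<lambda>(a,x). a # x) ` (A \<times> DD A n)"
  proof
    fix x assume "x \<in> DD A (Suc n)"
    then obtain a y where "x = a # y" "a \<in> A" "y \<in> DD A n"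
      by (cases x) (auto simp: DD_def)
    thus "x \<in> (\<lambda>(a,x). a # x) ` (A \<times> DD A n)" by force
  qed
  hence "|DD A (Suc n)| \<le>o |A \<times> DD A n|"
    using card_of_mono1 card_of_image ordLeq_transitive by blast
  also have "|A \<times> DD A n| =o |A|" using card_of_Times_infinite[OF assms ne Suc] by blast
  finally show ?case using ordIso_imp_ordLeq by blast
qed

lemma wo_facts: assumes "Well_order r"
  shows "\<forall>a\<in>Field r. (a,a) \<in> r" "trans r" "antisym r" "total_on (Field r) r"
  using assms by (auto simp: well_order_on_def linear_order_on_def partial_order_on_def
      preorder_on_def refl_on_def)

lemma wo_max_ex:
  assumes wo: "Well_order r" and fin: "finite S" and ne: "S \<noteq> {}" and sub: "S \<subseteq> Field r"
  shows "\<exists>a\<in>S. \<forall>b\<in>S. (b,a) \<in> r"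
  using fin ne sub
proof (induction S rule: finite_ne_induct)
  case (singleton x)
  then show ?case using wo_facts(1)[OF wo] by auto
next
  case (insert x F)
  then obtain a where a: "a \<in> F" "\<forall>b\<in>F. (b,a) \<in> r" by auto
  have xa: "x \<in> Field r" "a \<in> Field r" using insert a by auto
  hence "x = a \<or> (x,a) \<in> r \<or> (a,x) \<in> r" using wo_facts(4)[OF wo] by (auto simp: total_on_def)
  moreover have "(x,x) \<in> r" using xa wo_facts(1)[OF wo] by auto
  moreover note tr = wo_facts(2)[OF wo]
  ultimately show ?case using a insert(2)
    by (metis insert_iff transD[OF tr])
qed

definition mx :: "'b rel \<Rightarrow> 'b list \<Rightarrow> 'b" where
  "mx r x = (THE a. a \<in> set x \<and> (\<forall>b\<in>set x. (b,a) \<in> r))"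

lemma mx: assumes wo: "Well_order r" and "x \<noteq> []" and "set x \<subseteq> Field r"
  shows "mx r x \<in> set x" "\<forall>b\<in>set x. (b, mx r x) \<in> r"
proof -
  have ex: "\<exists>!a. a \<in> set x \<and> (\<forall>b\<in>set x. (b,a) \<in> r)"
  proof -
    obtain a where a: "a \<in> set x" "\<forall>b\<in>set x. (b,a) \<in> r"
      using wo_max_ex[OF wo, of "set x"] assms by auto
    moreover have "\<And>a'. a' \<in> set x \<and> (\<forall>b\<in>set x. (b,a') \<in> r) \<Longrightarrow> a' = a"
      using a wo_facts(3)[OF wo] by (metis antisymD)
    ultimately show ?thesis by blast
  qed
  show "mx r x \<in> set x" "\<forall>b\<in>set x. (b, mx r x) \<in> r"
    using theI'[OF ex] unfolding mx_def by auto
qed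

definition sg :: "nat \<Rightarrow> nat \<Rightarrow> nat" where "sg j i = (if i < j then i else Suc i)"
definition dl :: "nat \<Rightarrow> 'b list \<Rightarrow> 'b list" where "dl j x = take j x @ drop (Suc j) x"

lemma sg_inj: "sg j i = sg j i' \<Longrightarrow> i = i'" by (auto simp: sg_def split: if_splits)
lemma sg_neq: "sg j i \<noteq> j" by (auto simp: sg_def)
lemma dl_len: "j < length x \<Longrightarrow> length (dl j x) = length x - 1" by (auto simp: dl_def)
lemma dl_nth: "j < length x \<Longrightarrow> p < length x - 1 \<Longrightarrow> dl j x ! p = x ! sg j p"
  by (auto simp: dl_def sg_def nth_append min_def)
lemma dl_set: "set (dl j x) \<subseteq> set x"
  unfolding dl_def using set_take_subset set_drop_subset by fastforce
lemma dl_inj: assumes "j < length y" "length y = length y'" "y!j = y'!j" "dl j y = dl j y'"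
  shows "y = y'"
proof -
  have "take j y = take j y'" using assms(1,2,4) unfolding dl_def
    by (metis append_eq_append_conv length_take)
  moreover have "drop (Suc j) y = drop (Suc j) y'" using assms(1,2,4) unfolding dl_def
    by (metis append_eq_append_conv length_take)
  ultimately show ?thesis using assms id_take_nth_drop by metis
qed




definition Kup :: "'a rel \<Rightarrow> 'b set \<Rightarrow> nat \<Rightarrow> (nat \<Rightarrow> 'b list set) \<Rightarrow> bool" where
  "Kup \<kappa> A n G \<longleftrightarrow> (\<forall>i\<le>n. G i \<subseteq> DD A (Suc n)) \<and> (\<forall>x\<in>DD A (Suc n). \<exists>i\<le>n. x\<in>G i)
      \<and> (\<forall>i\<le>n. \<forall>x. |G i \<inter> line i x| \<le>o \<kappa>)"

lemma card_inf_set: assumes "Card_order \<kappa>" "\<not> finite (Field \<kappa>)" "\<kappa> \<le>o |B|"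
  shows "\<not> finite B"
  using assms card_of_Field_ordIso[OF assms(1)] card_of_ordLeq_finite ordIso_ordLeq_trans by blast

lemma kur_up:
  fixes \<kappa> :: "'a rel" and B :: "real set" and A :: "'b set"
  assumes card: "Card_order \<kappa>" and inf: "\<not> finite (Field \<kappa>)"
  shows "succ_iter_real \<kappa> n B \<Longrightarrow> |A| \<le>o |B| \<Longrightarrow> \<exists>G. Kup \<kappa> A n G"
proof (induction n arbitrary: A B)
  case 0
  have "|DD A 1| \<le>o |A|"
  proof -
    have "inj_on hd (DD A 1)" by (auto simp: DD_def inj_on_def length_Suc_conv)
    moreover have "hd ` DD A 1 \<subseteq> A" by (auto simp: DD_def length_Suc_conv)
    ultimately show ?thesis using card_of_ordLeq by blast
  qed
  also have "|A| \<le>o \<kappa>" using 0 ordLeq_ordIso_trans by auto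
  finally have "|DD A 1| \<le>o \<kappa>" .
  hence "|DD A 1 \<inter> line i x| \<le>o \<kappa>" for i x
    using card_of_mono1[of "DD A 1 \<inter> line i x" "DD A 1"] ordLeq_transitive by blast
  hence "Kup \<kappa> A 0 (\<lambda>i. DD A 1)" unfolding Kup_def by simp
  then show ?case by blast
next
  case (Suc n)
  obtain B' where B': "succ_iter_real \<kappa> n B'" "|B| =o cardSuc |B'|" using Suc.prems by auto
  define r where "r = |A|"
  have wo: "Well_order r" and Fr: "Field r = A" and cr: "Card_order r"
    unfolding r_def using card_of_Well_order[of A] Field_card_of[of A] card_of_Card_order[of A] by auto
  have Binf: "\<not> finite B'" using card_inf_set[OF card inf siter_ge[OF card B'(1)]] .
  have seg: "|under r a| \<le>o |B'|" if a: "a \<in> A" for a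
  proof -
    have e: "under r a = underS r a \<union> {a}"
      using wo_facts(1)[OF wo] a Fr by (auto simp: under_def underS_def)
    have "|underS r a| <o r" using card_of_underS[OF cr] a Fr by auto
    also have "r \<le>o |B|" using Suc.prems r_def by auto
    also have "|B| =o cardSuc |B'|" using B' by auto
    finally have "|underS r a| \<le>o |B'|"
      using cardSuc_ordLeq_ordLess[OF card_of_Card_order card_of_Card_order] by blast
    moreover have "|{a}| \<le>o |B'|" using Binf by (intro card_of_singl_ordLeq) auto
    moreover have "\<not> finite (Field |B'| )" unfolding Field_card_of using Binf .
    ultimately show ?thesis unfolding e
      by (intro card_of_Un_ordLeq_infinite_Field[of "|B'|", OF _ _ _ card_of_Card_order])
  qed
  define GG where "GG a = (SOME G. Kup \<kappa> (under r a) n G)" for a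
  have GG: "Kup \<kappa> (under r a) n (GG a)" if "a \<in> A" for a
    using Suc.IH[OF B'(1) seg[OF that]] unfolding GG_def by (rule someI_ex)
  define N where "N = Suc (Suc n)"
  define jx where "jx x = (LEAST j. x!j = mx r x)" for x :: "'b list"
  define ix where "ix x = (LEAST i. i \<le> n \<and> dl (jx x) x \<in> GG (mx r x) i)" for x
  define G where "G t = {x \<in> DD A N. sg (jx x) (ix x) = t}" for t
  have basic: "mx r x \<in> A \<and> (\<forall>b\<in>set x. (b, mx r x) \<in> r) \<and> jx x < N \<and> x ! jx x = mx r x
      \<and> (\<forall>j<jx x. x!j \<noteq> mx r x)
      \<and> dl (jx x) x \<in> DD (under r (mx r x)) (Suc n)
      \<and> ix x \<le> n \<and> dl (jx x) x \<in> GG (mx r x) (ix x)" if x: "x \<in> DD A N" for x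
  proof -
    have lx: "length x = N" and sxA: "set x \<subseteq> A" using x unfolding DD_def by auto
    have ne: "x \<noteq> []" using lx unfolding N_def by auto
    have sx: "set x \<subseteq> Field r" using sxA unfolding Fr .
    note m = mx[OF wo ne sx]
    obtain j0 where j0: "x!j0 = mx r x" "j0 < N" using m(1) lx by (auto simp: in_set_conv_nth)
    have j1: "x ! jx x = mx r x" unfolding jx_def using j0(1) by (rule LeastI)
    have j2: "jx x \<le> j0" unfolding jx_def using j0(1) by (rule Least_le)
    have j3: "\<forall>j<jx x. x!j \<noteq> mx r x" unfolding jx_def using not_less_Least by blast
    have jN: "jx x < N" using j0(2) j2 by (rule le_less_trans[rotated])
    have d1: "length (dl (jx x) x) = Suc n" using dl_len[of "jx x" x] jN lx by (simp add: N_def)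
    have d2: "set (dl (jx x) x) \<subseteq> under r (mx r x)"
    proof
      fix b assume "b \<in> set (dl (jx x) x)"
      hence "b \<in> set x" by (rule subsetD[OF dl_set])
      thus "b \<in> under r (mx r x)" using m(2) by (simp add: under_def)
    qed
    have d: "dl (jx x) x \<in> DD (under r (mx r x)) (Suc n)" using d1 d2 by (simp add: DD_def)
    have mA: "mx r x \<in> A" using m(1) sx Fr by auto
    have cov: "\<forall>y\<in>DD (under r (mx r x)) (Suc n). \<exists>i\<le>n. y \<in> GG (mx r x) i"
      using GG[OF mA] unfolding Kup_def by (rule conjunct1[OF conjunct2])
    obtain i where "i \<le> n \<and> dl (jx x) x \<in> GG (mx r x) i" using bspec[OF cov d] by blast
    hence ii: "ix x \<le> n \<and> dl (jx x) x \<in> GG (mx r x) (ix x)" unfolding ix_def by (rule LeastI)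
    show ?thesis using m(2) j1 j3 jN d mA ii by blast
  qed
  have key: "mx r y = mx r x \<and> jx y = jx x \<and> ix y = ix x \<and>
      dl (jx x) y \<in> line (ix x) (dl (jx x) x)"
    if x: "x \<in> G t" and y: "y \<in> G t" and yl: "y \<in> line t x" for x y t
  proof -
    have xD: "x \<in> DD A N" and yD: "y \<in> DD A N" and tx: "t = sg (jx x) (ix x)" and ty: "t = sg (jx y) (ix y)"
      using x y by (auto simp: G_def)
    note bx = basic[OF xD] and by' = basic[OF yD]
    have lx: "length x = N" and ly: "length y = N" using xD yD by (auto simp: DD_def)
    have yx: "\<And>p. p < N \<Longrightarrow> p \<noteq> t \<Longrightarrow> y!p = x!p" using yl lx by (auto simp: line_def)
    have "y ! jx x = mx r x" using yx[of "jx x"] bx tx sg_neq by metis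
    hence 1: "(mx r x, mx r y) \<in> r" using by' bx ly by (metis nth_mem)
    have "x ! jx y = mx r y" using yx[of "jx y"] by' ty sg_neq by metis
    hence 2: "(mx r y, mx r x) \<in> r" using by' bx lx by (metis nth_mem)
    have mm: "mx r y = mx r x" using 1 2 wo_facts(3)[OF wo] by (metis antisymD)
    have jj: "jx y = jx x"
    proof -
      have "y ! jx x = mx r y" using yx[of "jx x"] bx tx sg_neq mm by metis
      hence "\<not> jx x < jx y" using by' by auto
      moreover have "x ! jx y = mx r x" using yx[of "jx y"] by' ty sg_neq mm by metis
      hence "\<not> jx y < jx x" using bx by auto
      ultimately show ?thesis by simp
    qed
    have ii: "ix y = ix x" using tx ty jj sg_inj by metis
    have "dl (jx x) y \<in> line (ix x) (dl (jx x) x)"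
    proof -
      have l1: "length (dl (jx x) y) = Suc n" "length (dl (jx x) x) = Suc n"
        using dl_len[of "jx x" y] dl_len[of "jx x" x] bx lx ly by (auto simp: N_def)
      have "dl (jx x) y ! p = dl (jx x) x ! p" if "p < Suc n" "p \<noteq> ix x" for p
      proof -
        have "sg (jx x) p \<noteq> t" using tx sg_inj that(2) by metis
        moreover have "sg (jx x) p < N" using that(1) by (auto simp: sg_def N_def)
        moreover have jl: "jx x < length x" "jx x < length y" using bx lx ly by auto
        moreover have "p < length x - 1" "p < length y - 1" using that(1) lx ly by (auto simp: N_def)
        ultimately show ?thesis using dl_nth[of "jx x" x p] dl_nth[of "jx x" y p] yx by simp
      qed
      then show ?thesis using l1 by (auto simp: line_def)
    qed
    then show ?thesis using mm jj ii by auto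
  qed
  have "Kup \<kappa> A (Suc n) G"
    unfolding Kup_def
  proof (intro conjI allI impI ballI)
    fix i assume "i \<le> Suc n" show "G i \<subseteq> DD A (Suc (Suc n))" by (auto simp: G_def N_def)
  next
    fix x assume x: "x \<in> DD A (Suc (Suc n))"
    hence "x \<in> G (sg (jx x) (ix x))" by (auto simp: G_def N_def)
    moreover have "sg (jx x) (ix x) \<le> Suc n" using basic[of x] x by (auto simp: sg_def N_def)
    ultimately show "\<exists>i\<le>Suc n. x \<in> G i" by blast
  next
    fix t x assume "t \<le> Suc n"
    show "|G t \<inter> line t x| \<le>o \<kappa>"
    proof (cases "G t \<inter> line t x = {}")
      case True
      then show ?thesis using card_of_empty card_of_Field_ordIso[OF card] ordLeq_ordIso_trans by metis
    next
      case False
      then obtain x0 where x0: "x0 \<in> G t" "x0 \<in> line t x" by blast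
      have L: "line t x = line t x0" using line_eq[OF x0(2)] by simp
      have x0D: "x0 \<in> DD A N" using x0 by (auto simp: G_def)
      note b0 = basic[OF x0D]
      define h :: "'b list \<Rightarrow> 'b list" where "h = dl (jx x0)"
      have "inj_on h (G t \<inter> line t x0)"
      proof (rule inj_onI)
        fix y y' assume y: "y \<in> G t \<inter> line t x0" and y': "y' \<in> G t \<inter> line t x0" and e: "h y = h y'"
        note ky = key[OF x0(1) _ _, of y] and ky' = key[OF x0(1) _ _, of y']
        have yD: "y \<in> DD A N" "y' \<in> DD A N" using y y' by (auto simp: G_def)
        have "y ! jx x0 = mx r x0" using basic[OF yD(1)] ky y by auto
        moreover have "y' ! jx x0 = mx r x0" using basic[OF yD(2)] ky' y' by auto
        moreover have "length y = N" "length y' = N" using yD by (auto simp: DD_def)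
        ultimately show "y = y'" using dl_inj[of "jx x0" y y'] e b0 unfolding h_def by auto
      qed
      moreover have "h ` (G t \<inter> line t x0) \<subseteq> GG (mx r x0) (ix x0) \<inter> line (ix x0) (h x0)"
      proof
        fix z assume "z \<in> h ` (G t \<inter> line t x0)"
        then obtain y where y: "y \<in> G t" "y \<in> line t x0" "z = h y" by blast
        have yD: "y \<in> DD A N" using y by (auto simp: G_def)
        note ky = key[OF x0(1) y(1) y(2)]
        show "z \<in> GG (mx r x0) (ix x0) \<inter> line (ix x0) (h x0)"
          using basic[OF yD] ky y(3) unfolding h_def by auto
      qed
      ultimately have "|G t \<inter> line t x0| \<le>o |GG (mx r x0) (ix x0) \<inter> line (ix x0) (h x0)|"
        using card_of_ordLeq by blast
      also have "|GG (mx r x0) (ix x0) \<inter> line (ix x0) (h x0)| \<le>o \<kappa>"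
        using GG[of "mx r x0"] b0 unfolding Kup_def by blast
      finally show ?thesis using L by simp
    qed
  qed
  then show ?case by blast
qed




definition Klow :: "'a rel \<Rightarrow> 'b set \<Rightarrow> nat \<Rightarrow> (nat \<Rightarrow> 'b list set) \<Rightarrow> bool" where
  "Klow \<kappa> B n G \<longleftrightarrow> (\<forall>x\<in>DD B (Suc n). \<exists>i\<le>n. x\<in>G i)
      \<and> (\<forall>i\<le>n. \<forall>x. |G i \<inter> line i x \<inter> DD B (Suc n)| <o \<kappa>)"

lemma KlowD1: "Klow \<kappa> B n G \<Longrightarrow> x \<in> DD B (Suc n) \<Longrightarrow> \<exists>i\<le>n. x \<in> G i"
  unfolding Klow_def by blast
lemma KlowD2: "Klow \<kappa> B n G \<Longrightarrow> i \<le> n \<Longrightarrow> |G i \<inter> line i x \<inter> DD B (Suc n)| <o \<kappa>"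
  unfolding Klow_def by blast
lemma KlowI: "(\<And>x. x \<in> DD B (Suc n) \<Longrightarrow> \<exists>i\<le>n. x \<in> G i) \<Longrightarrow>
   (\<And>i x. i \<le> n \<Longrightarrow> |G i \<inter> line i x \<inter> DD B (Suc n)| <o \<kappa>) \<Longrightarrow> Klow \<kappa> B n G"
  unfolding Klow_def by blast

lemma kur_low:
  fixes \<kappa> :: "'a rel" and B :: "real set"
  assumes card: "Card_order \<kappa>" and inf: "\<not> finite (Field \<kappa>)"
  shows "succ_iter_real \<kappa> n B \<Longrightarrow> \<not> Klow \<kappa> B n G"
proof (induction n arbitrary: B G)
  case 0
  have Bk: "|B| =o \<kappa>" using 0 by simp
  hence Binf: "\<not> finite B" using iso_fin[OF card] inf by blast
  hence "B \<noteq> {}" by auto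
  then obtain b where b: "b \<in> B" by blast
  show ?case
  proof
    assume K: "Klow \<kappa> B 0 G"
    have sub: "(\<lambda>a. [a]) ` B \<subseteq> G 0 \<inter> line 0 [b] \<inter> DD B (Suc 0)"
    proof
      fix z assume "z \<in> (\<lambda>a. [a]) ` B"
      then obtain a where a: "a \<in> B" "z = [a]" by blast
      have zD: "z \<in> DD B (Suc 0)" using a by (simp add: DD_def)
      then obtain i where "i \<le> 0" "z \<in> G i" using KlowD1[OF K] by blast
      hence "z \<in> G 0" by simp
      moreover have "z \<in> line 0 [b]" using a by (simp add: line_def)
      ultimately show "z \<in> G 0 \<inter> line 0 [b] \<inter> DD B (Suc 0)" using zD by blast
    qed
    have "inj_on (\<lambda>a. [a]) B" by (auto simp: inj_on_def)
    hence "|B| \<le>o |G 0 \<inter> line 0 [b] \<inter> DD B (Suc 0)|"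
      using card_of_ordLeq sub by blast
    hence "\<kappa> \<le>o |G 0 \<inter> line 0 [b] \<inter> DD B (Suc 0)|"
      using Bk ordIso_ordLeq_trans ordIso_symmetric by blast
    moreover have "|G 0 \<inter> line 0 [b] \<inter> DD B (Suc 0)| <o \<kappa>" using KlowD2[OF K] by blast
    ultimately show False using not_ordLess_ordLeq by blast
  qed
next
  case (Suc n)
  obtain B' where B': "succ_iter_real \<kappa> n B'" "|B| =o cardSuc |B'|" using Suc.prems by auto
  have kB': "\<kappa> \<le>o |B'|" using siter_ge[OF card B'(1)] .
  have B'inf: "\<not> finite B'" using card_inf_set[OF card inf kB'] .
  have lt: "|B'| <o |B|"
    using cardSuc_greater[OF card_of_Card_order[of B']] B'(2) ordLess_ordIso_trans ordIso_symmetric by blast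
  obtain f where f: "inj_on f B'" "f ` B' \<subseteq> B"
    using card_of_ordLeq[of B' B] ordLess_imp_ordLeq[OF lt] by blast
  define X where "X = f ` B'"
  have XB: "X \<subseteq> B" using f X_def by auto
  have isoX: "|B'| =o |X|" using card_of_ordIso[of B' X] f(1) X_def inj_on_imp_bij_betw by blast
  have sX: "succ_iter_real \<kappa> n X" using siter_iso[OF B'(1) isoX] .
  have Xinf: "\<not> finite X" using B'inf isoX card_of_ordIso_finite by blast
  have kX: "\<kappa> \<le>o |X|" using kB' isoX ordLeq_ordIso_trans by blast
  have XltB: "|X| <o |B|" using isoX lt ordIso_ordLess_trans ordIso_symmetric by blast
  show ?case
  proof
    assume K: "Klow \<kappa> B (Suc n) G"
    define bad where "bad x = {b \<in> B. x @ [b] \<in> G (Suc n)}" for x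
    have badle: "|bad x| \<le>o |X|" if x: "x \<in> DD X (Suc n)" for x
    proof (cases "bad x = {}")
      case True then show ?thesis using card_of_empty by simp
    next
      case False
      then obtain b0 where b0: "b0 \<in> bad x" by blast
      have "(\<lambda>b. x @ [b]) ` bad x \<subseteq> G (Suc n) \<inter> line (Suc n) (x @ [b0]) \<inter> DD B (Suc (Suc n))"
      proof
        fix z assume "z \<in> (\<lambda>b. x @ [b]) ` bad x"
        then obtain b where bb: "b \<in> bad x" "z = x @ [b]" by blast
        have lx: "length x = Suc n" and sx: "set x \<subseteq> X" using x by (auto simp: DD_def)
        have "z \<in> G (Suc n)" using bb by (simp add: bad_def)
        moreover have "z \<in> DD B (Suc (Suc n))" using bb lx sx XB by (auto simp: DD_def bad_def)
        moreover have "z \<in> line (Suc n) (x @ [b0])" using bb lx by (auto simp: line_def nth_append)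
        ultimately show "z \<in> G (Suc n) \<inter> line (Suc n) (x @ [b0]) \<inter> DD B (Suc (Suc n))" by blast
      qed
      moreover have "inj_on (\<lambda>b. x @ [b]) (bad x)" by (auto simp: inj_on_def)
      ultimately have "|bad x| \<le>o |G (Suc n) \<inter> line (Suc n) (x @ [b0]) \<inter> DD B (Suc (Suc n))|"
        using card_of_ordLeq by blast
      also have "|G (Suc n) \<inter> line (Suc n) (x @ [b0]) \<inter> DD B (Suc (Suc n))| <o \<kappa>"
        using KlowD2[OF K] by blast
      finally show ?thesis using kX ordLess_imp_ordLeq ordLess_ordLeq_trans by blast
    qed
    have "|\<Union>x\<in>DD X (Suc n). bad x| \<le>o |X|"
      using card_of_UNION_ordLeq_infinite[OF Xinf DD_card[OF Xinf]] badle by blast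
    hence "\<not> B \<subseteq> (\<Union>x\<in>DD X (Suc n). bad x)"
      using XltB card_of_mono1 not_ordLess_ordLeq ordLeq_transitive by blast
    then obtain b where b: "b \<in> B" "\<forall>x\<in>DD X (Suc n). b \<notin> bad x" by blast
    define G' where "G' i = {x \<in> DD X (Suc n). x @ [b] \<in> G i}" for i
    have "Klow \<kappa> X n G'"
    proof (rule KlowI)
      fix x assume x: "x \<in> DD X (Suc n)"
      hence "x @ [b] \<in> DD B (Suc (Suc n))" using XB b by (auto simp: DD_def)
      then obtain i where i: "i \<le> Suc n" "x @ [b] \<in> G i" using KlowD1[OF K] by blast
      have "i \<noteq> Suc n" using b x i(2) by (auto simp: bad_def)
      hence "i \<le> n" using i(1) by simp
      thus "\<exists>i\<le>n. x \<in> G' i" using i x by (auto simp: G'_def)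
    next
      fix i x assume i: "i \<le> n"
      have "(\<lambda>y. y @ [b]) ` (G' i \<inter> line i x \<inter> DD X (Suc n)) \<subseteq> G i \<inter> line i (x @ [b]) \<inter> DD B (Suc (Suc n))"
      proof
        fix z assume "z \<in> (\<lambda>y. y @ [b]) ` (G' i \<inter> line i x \<inter> DD X (Suc n))"
        then obtain y where y: "y \<in> G' i" "y \<in> line i x" "y \<in> DD X (Suc n)" "z = y @ [b]" by blast
        have ly: "length y = Suc n" and sy: "set y \<subseteq> X" using y(3) by (auto simp: DD_def)
        have lxy: "length y = length x" and yx: "\<forall>j<length x. j \<noteq> i \<longrightarrow> y!j = x!j"
          using y(2) by (auto simp: line_def)
        have "z \<in> G i" using y by (simp add: G'_def)
        moreover have "z \<in> DD B (Suc (Suc n))" using y(4) ly sy XB b(1) by (auto simp: DD_def)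
        moreover have "z \<in> line i (x @ [b])"
        proof -
          have "(y @ [b]) ! j = (x @ [b]) ! j" if "j < length (x @ [b])" "j \<noteq> i" for j
          proof (cases "j < length x")
            case True then show ?thesis using yx that lxy by (simp add: nth_append)
          next
            case False then show ?thesis using that lxy by (simp add: nth_append)
          qed
          thus ?thesis using y(4) lxy by (simp add: line_def)
        qed
        ultimately show "z \<in> G i \<inter> line i (x @ [b]) \<inter> DD B (Suc (Suc n))" by blast
      qed
      moreover have "inj_on (\<lambda>y. y @ [b]) (G' i \<inter> line i x \<inter> DD X (Suc n))" by (auto simp: inj_on_def)
      ultimately have "|G' i \<inter> line i x \<inter> DD X (Suc n)| \<le>o |G i \<inter> line i (x @ [b]) \<inter> DD B (Suc (Suc n))|"
        using card_of_ordLeq by blast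
      also have "|G i \<inter> line i (x @ [b]) \<inter> DD B (Suc (Suc n))| <o \<kappa>" using KlowD2[OF K] i by simp
      finally show "|G' i \<inter> line i x \<inter> DD X (Suc n)| <o \<kappa>" .
    qed
    thus False using Suc.IH[OF sX] by blast
  qed
qed




definition pt :: "nat \<Rightarrow> nat \<times> real \<Rightarrow> real list" where
  "pt d s = (replicate d 0)[fst s := snd s]"

definition SS :: "nat \<Rightarrow> nat \<Rightarrow> (nat \<times> real) set" where
  "SS d r = {(0,0)} \<union> (\<lambda>q. (0, real q)) ` {1..Suc r} \<union> (\<lambda>i. (i,1)) ` {1..<d}"

definition PP :: "nat \<Rightarrow> nat \<Rightarrow> real list set" where
  "PP d r = pt d ` SS d r"

lemma SS_ax: "1 \<le> d \<Longrightarrow> s \<in> SS d r \<Longrightarrow> fst s < d"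
  by (auto simp: SS_def)

lemma SS_nz: "s \<in> SS d r \<Longrightarrow> snd s = 0 \<Longrightarrow> s = (0,0)"
  by (auto simp: SS_def)

lemma SS_fin: "finite (SS d r)" by (simp add: SS_def)

lemma SS_one: "i < d \<Longrightarrow> (i, 1) \<in> SS d r"
  by (cases "i = 0") (force simp: SS_def)+

lemma SS_zero: "(0,0) \<in> SS d r" by (simp add: SS_def)

lemma pt_len[simp]: "length (pt d s) = d" by (simp add: pt_def)

lemma pt_nth: "t < d \<Longrightarrow> fst s < d \<Longrightarrow> pt d s ! t = (if t = fst s then snd s else 0)"
  by (simp add: pt_def nth_list_update)

lemma pt_inj: assumes "1 \<le> d" shows "inj_on (pt d) (SS d r)"
proof (rule inj_onI)
  fix s s' assume s: "s \<in> SS d r" and s': "s' \<in> SS d r" and e: "pt d s = pt d s'"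
  have a: "fst s < d" "fst s' < d" using SS_ax[OF assms] s s' by auto
  have n1: "snd s = (if fst s = fst s' then snd s' else 0)"
    using pt_nth[of "fst s" d s] pt_nth[of "fst s" d s'] a e by simp
  have n2: "snd s' = (if fst s' = fst s then snd s else 0)"
    using pt_nth[of "fst s'" d s] pt_nth[of "fst s'" d s'] a e by simp
  show "s = s'"
  proof (cases "snd s = 0")
    case True
    hence "snd s' = 0" using n2 by auto
    thus ?thesis using True SS_nz s s' by metis
  next
    case False
    hence "fst s = fst s'" using n1 by (auto split: if_splits)
    thus ?thesis using n1 by (simp add: prod_eq_iff)
  qed
qed

lemma SS_card: assumes "1 \<le> d" shows "card (SS d r) = r + d + 1"
proof -
  have c1: "card ((\<lambda>q. (0::nat, real q)) ` {1..Suc r}) = Suc r"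
    by (subst card_image) (auto simp: inj_on_def)
  have c2: "card ((\<lambda>i. (i, 1::real)) ` {1..<d}) = d - 1"
    by (subst card_image) (auto simp: inj_on_def)
  have "card ({(0::nat,0::real)} \<union> (\<lambda>q. (0, real q)) ` {1..Suc r} \<union> (\<lambda>i. (i,1)) ` {1..<d})
      = card ({(0::nat,0::real)} \<union> (\<lambda>q. (0, real q)) ` {1..Suc r}) + card ((\<lambda>i. (i,1::real)) ` {1..<d})"
    by (rule card_Un_disjoint) auto
  also have "card ({(0::nat,0::real)} \<union> (\<lambda>q. (0, real q)) ` {1..Suc r}) = 1 + Suc r"
    using c1 by (subst card_Un_disjoint) auto
  finally show ?thesis using c2 assms unfolding SS_def by simp
qed

lemma PP_card: "1 \<le> d \<Longrightarrow> card (PP d r) = r + d + 1"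
  unfolding PP_def using card_image[OF pt_inj] SS_card by metis

lemma lines_inter: assumes "i \<noteq> j" "z \<in> line i x" "z \<in> line j x" shows "z = x"
proof (rule nth_equalityI)
  show "length z = length x" using assms by (simp add: line_def)
  fix t assume "t < length z"
  thus "z ! t = x ! t" using assms by (cases "t = i") (auto simp: line_def)
qed

lemma cross:
  assumes d: "1 \<le> d" and Q: "Q \<in> L_edges d (PP d r)"
  shows "\<exists>x\<in>Q. \<forall>i<d. \<exists>y\<in>Q. y \<noteq> x \<and> y \<in> line i x"
proof -
  let ?P = "PP d r"
  have QR: "Q \<subseteq> Rd d" and tQ: "template d (card ?P) Q" and h: "hom_image d ?P Q"
    using Q by (auto simp: L_edges_def)
  obtain f where f: "f ` ?P = Q" and hom: "\<forall>x\<in>?P. \<forall>y\<in>?P. \<forall>i<d. x ! i = y ! i \<longrightarrow> f x ! i = f y ! i"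
    using h unfolding hom_image_def by blast
  have finP: "finite ?P" unfolding PP_def using SS_fin by simp
  have "card (f ` ?P) = card ?P" using f tQ by (simp add: template_def)
  hence inj: "inj_on f ?P" using eq_card_imp_inj_on[OF finP] by blast
  define z where "z = pt d (0,0)"
  have zP: "z \<in> ?P" unfolding z_def PP_def using SS_zero by blast
  have fzQ: "f z \<in> Q" using zP f by blast
  have "\<forall>i<d. \<exists>y\<in>Q. y \<noteq> f z \<and> y \<in> line i (f z)"
  proof (intro allI impI)
    fix i assume i: "i < d"
    define p where "p = pt d (i,1)"
    have pP: "p \<in> ?P" unfolding p_def PP_def using SS_one[OF i] by blast
    have pz: "p \<noteq> z" unfolding p_def z_def using pt_inj[OF d] SS_one[OF i] SS_zero
      by (metis inj_on_contraD old.prod.inject zero_neq_one)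
    have "f p \<noteq> f z" using inj pP zP pz by (meson inj_on_contraD)
    moreover have "f p \<in> line i (f z)"
    proof -
      have l: "length (f p) = d" "length (f z) = d" using QR f pP zP by (auto simp: Rd_def)
      have "f p ! t = f z ! t" if "t < d" "t \<noteq> i" for t
      proof -
        have "p ! t = z ! t" unfolding p_def z_def using pt_nth[of t d] that i d by simp
        thus ?thesis using hom pP zP that(1) by blast
      qed
      thus ?thesis using l by (simp add: line_def)
    qed
    moreover have "f p \<in> Q" using pP f by blast
    ultimately show "\<exists>y\<in>Q. y \<noteq> f z \<and> y \<in> line i (f z)" by blast
  qed
  thus ?thesis using fzQ by blast
qed

lemma edge_exists:
  assumes d: "1 \<le> d" and xR: "x \<in> Rd d" and C: "x \<in> C" and CR: "C \<subseteq> Rd d"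
    and inf: "\<forall>i<d. \<not> finite (C \<inter> line i x)"
  shows "\<exists>Q\<in>L_edges d (PP d r). Q \<subseteq> C"
proof -
  have inf': "\<not> finite (C \<inter> line i x - {x})" if "i < d" for i
    using inf that by auto
  obtain W where W: "finite W" "card W = Suc r" "W \<subseteq> C \<inter> line 0 x - {x}"
    using infinite_arbitrarily_large[OF inf'[of 0]] d by auto
  obtain w where w: "bij_betw w {1..Suc r} W"
    using finite_same_card_bij[of "{1..Suc r}" W] W by auto
  define yv where "yv i = (SOME y. y \<in> C \<inter> line i x - {x})" for i
  have yv: "yv i \<in> C \<inter> line i x - {x}" if "i < d" for i
  proof -
    have "C \<inter> line i x - {x} \<noteq> {}" using inf'[OF that] by (metis finite.emptyI)
    thus ?thesis unfolding yv_def by (metis ex_in_conv someI_ex)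
  qed
  define g :: "nat \<times> real \<Rightarrow> real list" where "g s = (if snd s = 0 then x else if fst s = 0 then w (nat \<lfloor>snd s\<rfloor>) else yv (fst s))" for s
  have gS: "g s \<in> C \<and> g s \<in> line (fst s) x \<and> (snd s \<noteq> 0 \<longrightarrow> g s \<noteq> x)" if s: "s \<in> SS d r" for s
  proof -
    consider "s = (0,0)" | q where "q \<in> {1..Suc r}" "s = (0, real q)" | i where "i \<in> {1..<d}" "s = (i, 1)"
      using s unfolding SS_def by blast
    then show ?thesis
    proof cases
      case 1 then show ?thesis using C by (simp add: g_def)
    next
      case 2
      have "g s = w q" using 2 by (simp add: g_def)
      moreover have "w q \<in> W" using w 2(1) by (meson bij_betwE)
      ultimately show ?thesis using W(3) 2 by auto
    next
      case 3
      have "g s = yv i" using 3 by (simp add: g_def)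
      thus ?thesis using yv[of i] 3 by auto
    qed
  qed
  have gx: "g s ! t = x ! t" if s: "s \<in> SS d r" and t: "t < d" and c: "t \<noteq> fst s \<or> snd s = 0" for s t
  proof (cases "snd s = 0")
    case True then show ?thesis by (simp add: g_def)
  next
    case False
    hence "t \<noteq> fst s" using c by simp
    moreover have "g s \<in> line (fst s) x" using gS[OF s] by simp
    ultimately show ?thesis using t xR by (auto simp: line_def Rd_def)
  qed
  have ginj: "inj_on g (SS d r)"
  proof (rule inj_onI)
    fix s s' assume s: "s \<in> SS d r" and s': "s' \<in> SS d r" and e: "g s = g s'"
    show "s = s'"
    proof (cases "snd s = 0 \<or> snd s' = 0")
      case True
      hence "g s = x \<or> g s' = x" by (auto simp: g_def)
      hence "snd s = 0 \<and> snd s' = 0" using gS[OF s] gS[OF s'] e by metis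
      thus ?thesis using SS_nz s s' by metis
    next
      case False
      show ?thesis
      proof (cases "fst s = fst s'")
        case ff: True
        show ?thesis
        proof (cases "fst s = 0")
          case True
          obtain q where q: "q \<in> {1..Suc r}" "s = (0, real q)" using s False True unfolding SS_def by auto
          obtain q' where q': "q' \<in> {1..Suc r}" "s' = (0, real q')" using s' False True ff unfolding SS_def by auto
          have "w q = w q'" using e q q' by (simp add: g_def)
          hence "q = q'" using w q(1) q'(1) by (metis bij_betw_imp_inj_on inj_onD)
          thus ?thesis using q q' by simp
        next
          case fz: False
          have "s = (fst s, 1)" "s' = (fst s', 1)" using s s' fz ff unfolding SS_def by auto
          thus ?thesis using ff by metis
        qed
      next
        case nf: False
        have "g s \<in> line (fst s) x" "g s \<in> line (fst s') x" using gS[OF s] gS[OF s'] e by auto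
        hence "g s = x" using lines_inter nf by metis
        thus ?thesis using gS[OF s] False by blast
      qed
    qed
  qed
  define f where "f p = g (inv_into (SS d r) (pt d) p)" for p
  have fpt: "f (pt d s) = g s" if "s \<in> SS d r" for s
    unfolding f_def using inv_into_f_f[OF pt_inj[OF d] that] by simp
  define Q where "Q = g ` SS d r"
  have fP: "f ` PP d r = Q" unfolding Q_def PP_def image_image using fpt by (simp cong: image_cong)
  have QC: "Q \<subseteq> C" unfolding Q_def using gS by blast
  have QR: "Q \<subseteq> Rd d" using QC CR by blast
  have cardQ: "card Q = card (PP d r)"
    unfolding Q_def PP_def using card_image[OF ginj] card_image[OF pt_inj[OF d]] by simp
  have hom: "\<forall>p\<in>PP d r. \<forall>p'\<in>PP d r. \<forall>t<d. p ! t = p' ! t \<longrightarrow> f p ! t = f p' ! t"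
  proof (intro ballI allI impI)
    fix p p' t assume p: "p \<in> PP d r" and p': "p' \<in> PP d r" and t: "t < d" and e: "p ! t = p' ! t"
    obtain s where s: "s \<in> SS d r" "p = pt d s" using p unfolding PP_def by blast
    obtain s' where s': "s' \<in> SS d r" "p' = pt d s'" using p' unfolding PP_def by blast
    have n: "pt d s ! t = (if t = fst s then snd s else 0)" "pt d s' ! t = (if t = fst s' then snd s' else 0)"
      using pt_nth[OF t] SS_ax[OF d] s(1) s'(1) by auto
    show "f p ! t = f p' ! t"
    proof (cases "pt d s ! t = 0")
      case True
      hence "t \<noteq> fst s \<or> snd s = 0" "t \<noteq> fst s' \<or> snd s' = 0" using n e s s' by (auto split: if_splits)
      thus ?thesis using gx[OF s(1) t] gx[OF s'(1) t] fpt s s' by simp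
    next
      case False
      hence "t = fst s" "t = fst s'" "snd s = snd s'" using n e s s' by (auto split: if_splits)
      hence "s = s'" by (simp add: prod_eq_iff)
      thus ?thesis using s s' by simp
    qed
  qed
  have "Q \<in> L_edges d (PP d r)"
    unfolding L_edges_def template_def hom_image_def
  proof (intro CollectI conjI)
    show "Q \<subseteq> Rd d" by (rule QR)
    show "finite Q" unfolding Q_def using SS_fin by simp
    show "card Q = card (PP d r)" by (rule cardQ)
    show "\<forall>x\<in>Q. length x = d" using QR by (auto simp: Rd_def)
    show "\<exists>f. f ` PP d r = Q \<and> (\<forall>x\<in>PP d r. \<forall>y\<in>PP d r. \<forall>i<d. x ! i = y ! i \<longrightarrow> f x ! i = f y ! i)"
      using fP hom by blast
  qed
  thus ?thesis using QC by blast
qed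




lemma Rd_DD: "Rd d = DD UNIV d" by (auto simp: Rd_def DD_def)

lemma fin_lt_inf: assumes "Card_order \<kappa>" "\<not> finite (Field \<kappa>)" "finite A" shows "|A| <o \<kappa>"
  using finite_ordLess_infinite[OF card_of_Well_order card_order_on_well_order_on[OF assms(1)]] assms
  by (simp add: Field_card_of)

lemma union_finite_lt:
  assumes card: "Card_order \<kappa>" and inf: "\<not> finite (Field \<kappa>)" and I: "|I| <o \<kappa>"
    and fin: "\<forall>i\<in>I. finite (A i)"
  shows "|\<Union>i\<in>I. A i| <o \<kappa>"
proof (cases "finite I")
  case True
  have "finite (\<Union>i\<in>I. A i)" using True fin by blast
  then show ?thesis by (rule fin_lt_inf[OF card inf])
next
  case False
  have "\<forall>i\<in>I. |A i| \<le>o |I|"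
  proof
    fix i assume "i \<in> I"
    hence "finite (A i)" using fin by blast
    thus "|A i| \<le>o |I|"
      using finite_ordLess_infinite[OF card_of_Well_order card_of_Well_order] False
      by (metis Field_card_of ordLess_imp_ordLeq)
  qed
  hence "|\<Union>i\<in>I. A i| \<le>o |I|" using card_of_UNION_ordLeq_infinite[OF False] card_of_refl ordIso_imp_ordLeq by blast
  thus ?thesis using I ordLeq_ordLess_trans by blast
qed

lemma upper:
  fixes \<kappa> :: "'a rel"
  assumes card: "Card_order \<kappa>" and inf: "\<not> finite (Field \<kappa>)"
    and kR: "\<kappa> \<le>o |UNIV :: real set|" and K: "Kup \<kappa> (UNIV :: real set) m G"
  shows "\<exists>c :: real list \<Rightarrow> real list. proper_colouring (Rd (Suc m)) (L_edges (Suc m) (PP (Suc m) r)) c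
           \<and> |c ` Rd (Suc m)| \<le>o \<kappa>"
proof -
  define d where "d = Suc m"
  have FK: "|Field \<kappa>| =o \<kappa>" using card_of_Field_ordIso[OF card] .
  obtain e :: "'a \<Rightarrow> real" where e: "inj_on e (Field \<kappa>)"
    using card_of_ordLeq[of "Field \<kappa>" "UNIV :: real set"] FK kR ordIso_ordLeq_trans by blast
  have cov: "\<forall>x\<in>DD UNIV (Suc m). \<exists>i\<le>m. x \<in> G i" and sm: "\<forall>i\<le>m. \<forall>x. |G i \<inter> line i x| \<le>o \<kappa>"
    using K unfolding Kup_def by blast+
  define gs where "gs i x = (SOME h. inj_on h (G i \<inter> line i x) \<and> h ` (G i \<inter> line i x) \<subseteq> Field \<kappa>)" for i x
  have gs: "inj_on (gs i x) (G i \<inter> line i x) \<and> gs i x ` (G i \<inter> line i x) \<subseteq> Field \<kappa>" if "i \<le> m" for i x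
  proof -
    have "|G i \<inter> line i x| \<le>o |Field \<kappa>|"
      using sm that FK ordLeq_ordIso_trans ordIso_symmetric by blast
    hence "\<exists>h. inj_on h (G i \<inter> line i x) \<and> h ` (G i \<inter> line i x) \<subseteq> Field \<kappa>"
      using card_of_ordLeq by blast
    thus ?thesis unfolding gs_def by (rule someI_ex)
  qed
  define ixc where "ixc x = (LEAST i. i \<le> m \<and> x \<in> G i)" for x
  have ixc: "ixc x \<le> m \<and> x \<in> G (ixc x)" if "x \<in> Rd d" for x
  proof -
    have "x \<in> DD UNIV (Suc m)" using that unfolding Rd_DD d_def .
    then obtain i where "i \<le> m \<and> x \<in> G i" using cov by blast
    thus ?thesis unfolding ixc_def by (rule LeastI)
  qed
  define c where "c x = [real (ixc x), e (gs (ixc x) x x)]" for x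
  have cin: "gs (ixc x) x x \<in> Field \<kappa>" if "x \<in> Rd d" for x
    using gs[of "ixc x" x] ixc[OF that] by auto
  have img: "c ` Rd d \<subseteq> (\<lambda>(i,a). [real i, e a]) ` ({..m} \<times> Field \<kappa>)"
  proof
    fix z assume "z \<in> c ` Rd d"
    then obtain x where x: "x \<in> Rd d" "z = c x" by blast
    have "(ixc x, gs (ixc x) x x) \<in> {..m} \<times> Field \<kappa>" using ixc[OF x(1)] cin[OF x(1)] by auto
    thus "z \<in> (\<lambda>(i,a). [real i, e a]) ` ({..m} \<times> Field \<kappa>)" using x unfolding c_def by force
  qed
  have "|c ` Rd d| \<le>o |{..m} \<times> Field \<kappa>|"
    using card_of_mono1[OF img] card_of_image ordLeq_transitive by blast
  also have "|{..m} \<times> Field \<kappa>| =o |Field \<kappa>|"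
  proof -
    have "\<not> finite (Field |Field \<kappa>| )" unfolding Field_card_of by (rule inf)
    hence "|{..m}| <o |Field \<kappa>|" using fin_lt_inf[OF card_of_Card_order, of "Field \<kappa>" "{..m}"] by simp
    hence "|{..m}| \<le>o |Field \<kappa>|" by (rule ordLess_imp_ordLeq)
    thus ?thesis using card_of_Times_infinite[OF inf, of "{..m}"] by auto
  qed
  also have "|Field \<kappa>| =o \<kappa>" by (rule FK)
  finally have sz: "|c ` Rd d| \<le>o \<kappa>" .
  have prp: "proper_colouring (Rd d) (L_edges d (PP d r)) c"
    unfolding proper_colouring_def
  proof
    fix Q assume Q: "Q \<in> L_edges d (PP d r)"
    have QR: "Q \<subseteq> Rd d" using Q by (simp add: L_edges_def)
    obtain x where x: "x \<in> Q" and cr: "\<forall>i<d. \<exists>y\<in>Q. y \<noteq> x \<and> y \<in> line i x"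
      using cross[OF _ Q] d_def by auto
    have xR: "x \<in> Rd d" using x QR by blast
    define i where "i = ixc x"
    have im: "i \<le> m" "x \<in> G i" using ixc[OF xR] i_def by auto
    have id: "i < d" using im(1) d_def by simp
    obtain y where y: "y \<in> Q" "y \<noteq> x" "y \<in> line i x" using cr id by blast
    have yR: "y \<in> Rd d" using y QR by blast
    show "\<exists>x\<in>Q. \<exists>y\<in>Q. c x \<noteq> c y"
    proof (rule ccontr)
      assume "\<not> (\<exists>x\<in>Q. \<exists>y\<in>Q. c x \<noteq> c y)"
      hence ce: "c y = c x" using x y by blast
      hence iy: "ixc y = i" unfolding c_def i_def by simp
      hence ee: "e (gs i y y) = e (gs i x x)" using ce unfolding c_def i_def by simp
      have gsq: "gs i y = gs i x" unfolding gs_def using line_eq[OF y(3)] by simp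
      have yG: "y \<in> G i" using ixc[OF yR] iy by simp
      have xl: "x \<in> G i \<inter> line i x" "y \<in> G i \<inter> line i x" using im yG y by auto
      have "gs i x y \<in> Field \<kappa>" "gs i x x \<in> Field \<kappa>" using gs[OF im(1), of x] xl by auto
      hence "gs i x y = gs i x x" using ee gsq e by (metis inj_onD)
      hence "y = x" using gs[OF im(1), of x] xl by (metis inj_onD)
      thus False using y(2) by blast
    qed
  qed
  show ?thesis using prp sz unfolding d_def by blast
qed

lemma lower:
  fixes \<kappa> :: "'a rel" and B :: "real set" and c :: "real list \<Rightarrow> real list"
  assumes card: "Card_order \<kappa>" and inf: "\<not> finite (Field \<kappa>)" and sB: "succ_iter_real \<kappa> m B"
    and prp: "proper_colouring (Rd (Suc m)) (L_edges (Suc m) (PP (Suc m) r)) c"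
  shows "\<kappa> \<le>o |c ` Rd (Suc m)|"
proof (rule ccontr)
  define d where "d = Suc m"
  define V where "V = Rd d"
  assume "\<not> \<kappa> \<le>o |c ` Rd (Suc m)|"
  hence nl: "\<not> \<kappa> \<le>o |c ` V|" unfolding V_def d_def .
  have W: "(\<not> \<kappa> \<le>o |c ` V| ) = ( |c ` V| <o \<kappa>)"
    by (rule not_ordLeq_iff_ordLess[OF card_of_Well_order card_order_on_well_order_on[OF card]])
  have lt: "|c ` V| <o \<kappa>" using nl W by simp
  define cls where "cls x = {y \<in> V. c y = c x}" for x
  define Gl where "Gl i = {x \<in> V. finite (cls x \<inter> line i x)}" for i
  have "Klow \<kappa> B m Gl"
  proof (rule KlowI)
    fix x assume x: "x \<in> DD B (Suc m)"
    hence "length x = Suc m" unfolding DD_def by blast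
    hence xV: "x \<in> V" by (simp add: Rd_def d_def V_def)
    show "\<exists>i\<le>m. x \<in> Gl i"
    proof (rule ccontr)
      assume nG: "\<not> (\<exists>i\<le>m. x \<in> Gl i)"
      have nf: "\<forall>i<d. \<not> finite (cls x \<inter> line i x)"
      proof (intro allI impI)
        fix i assume "i < d"
        hence "i \<le> m" by (simp add: d_def)
        hence "x \<notin> Gl i" using nG by blast
        thus "\<not> finite (cls x \<inter> line i x)" using xV by (simp add: Gl_def)
      qed
      have xc: "x \<in> cls x" unfolding cls_def using xV by (intro CollectI conjI refl)
      have cR: "cls x \<subseteq> Rd d" unfolding cls_def V_def by (rule Collect_restrict)
      have xR: "x \<in> Rd d" using xV unfolding V_def .
      have d1: "1 \<le> d" unfolding d_def by simp
      obtain Q where Q: "Q \<in> L_edges d (PP d r)" "Q \<subseteq> cls x"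
        using edge_exists[OF d1 xR xc cR nf] by blast
      obtain u v where uv: "u \<in> Q" "v \<in> Q" "c u \<noteq> c v"
        using prp Q(1) unfolding proper_colouring_def d_def by blast
      have "c u = c x" "c v = c x" using Q(2) uv(1,2) unfolding cls_def by blast+
      thus False using uv(3) by simp
    qed
  next
    fix i x assume i: "i \<le> m"
    have sub: "Gl i \<inter> line i x \<inter> DD B (Suc m) \<subseteq> (\<Union>col\<in>c ` V. {y \<in> Gl i \<inter> line i x. c y = col})"
    proof
      fix y assume y: "y \<in> Gl i \<inter> line i x \<inter> DD B (Suc m)"
      hence "y \<in> V" by (simp add: Gl_def)
      thus "y \<in> (\<Union>col\<in>c ` V. {y \<in> Gl i \<inter> line i x. c y = col})" using y by blast
    qed
    have "\<forall>col\<in>c ` V. finite {y \<in> Gl i \<inter> line i x. c y = col}"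
    proof
      fix col assume "col \<in> c ` V"
      show "finite {y \<in> Gl i \<inter> line i x. c y = col}"
      proof (cases "{y \<in> Gl i \<inter> line i x. c y = col} = {}")
        case True thus ?thesis by (simp only: finite.emptyI)
      next
        case False
        then obtain y0 where y0: "y0 \<in> Gl i" "y0 \<in> line i x" "c y0 = col" by blast
        have "{y \<in> Gl i \<inter> line i x. c y = col} \<subseteq> cls y0 \<inter> line i y0"
        proof
          fix y assume y: "y \<in> {y \<in> Gl i \<inter> line i x. c y = col}"
          hence "y \<in> V" by (simp add: Gl_def)
          hence "y \<in> cls y0" using y y0(3) by (simp add: cls_def)
          moreover have "y \<in> line i y0" using y line_eq[OF y0(2)] by simp
          ultimately show "y \<in> cls y0 \<inter> line i y0" by blast
        qed
        moreover have "finite (cls y0 \<inter> line i y0)" using y0(1) by (simp add: Gl_def)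
        ultimately show ?thesis by (rule finite_subset)
      qed
    qed
    hence "|\<Union>col\<in>c ` V. {y \<in> Gl i \<inter> line i x. c y = col}| <o \<kappa>"
      by (rule union_finite_lt[OF card inf lt])
    thus "|Gl i \<inter> line i x \<inter> DD B (Suc m)| <o \<kappa>"
      by (rule ordLeq_ordLess_trans[OF card_of_mono1[OF sub]])
  qed
  moreover have "\<not> Klow \<kappa> B m Gl" by (rule kur_low[OF card inf sB])
  ultimately show False by contradiction
qed

theorem corollary1p6:
  fixes k :: nat and \<kappa> :: "'a rel"
  assumes "2 \<le> k"
    and "Card_order \<kappa>"
    and "\<kappa> \<le>o card_of (UNIV :: real set)"
    and "continuum_le_succ_iter \<kappa> (k - 2)"
  shows "\<exists>d (P :: real list set). 1 \<le> d \<and> template d k P \<and>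
           chromatic_number_is (Rd d) (L_edges d P) \<kappa>"
proof -
  obtain m B where m: "m \<le> k - 2" and sB: "succ_iter_real \<kappa> m B" and UB: "|UNIV::real set| \<le>o |B|"
    using assms(4) unfolding continuum_le_succ_iter_def by blast
  have inf: "\<not> finite (Field \<kappa>)"
  proof
    assume "finite (Field \<kappa>)"
    hence "finite B" using siter_finite[OF assms(2) _ sB] by blast
    hence "finite (UNIV::real set)" using UB card_of_ordLeq_finite by blast
    thus False by (simp add: infinite_UNIV_char_0)
  qed
  define d where "d = Suc m"
  define r where "r = k - 2 - m"
  define P where "P = PP d r"
  have tP: "template d k P"
    unfolding template_def
  proof (intro conjI)
    show "finite P" unfolding P_def PP_def using SS_fin by simp
    show "card P = k" unfolding P_def using PP_card[of d r] m assms(1) by (simp add: d_def r_def)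
    show "\<forall>x\<in>P. length x = d" unfolding P_def PP_def by simp
  qed
  obtain G where G: "Kup \<kappa> (UNIV :: real set) m G" using kur_up[OF assms(2) inf sB UB] by blast
  obtain c :: "real list \<Rightarrow> real list" where c: "proper_colouring (Rd d) (L_edges d P) c" "|c ` Rd d| \<le>o \<kappa>"
    using upper[OF assms(2) inf assms(3) G, of r] unfolding d_def P_def by blast
  have low: "\<forall>c :: real list \<Rightarrow> real list. proper_colouring (Rd d) (L_edges d P) c \<longrightarrow> \<kappa> \<le>o |c ` Rd d|"
    using lower[OF assms(2) inf sB] unfolding d_def P_def by blast
  have "\<kappa> \<le>o |c ` Rd d|" using low c(1) by blast
  hence iso: "\<kappa> =o |c ` Rd d|" using c(2) ordIso_iff_ordLeq by blast
  have ch: "chromatic_number_is (Rd d) (L_edges d P) \<kappa>"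
    unfolding chromatic_number_is_def
  proof (rule conjI)
    show "\<exists>c :: real list \<Rightarrow> real list. proper_colouring (Rd d) (L_edges d P) c \<and> \<kappa> =o |c ` Rd d|"
      using c(1) iso by blast
  qed (rule low)
  have d1: "1 \<le> d" by (simp add: d_def)
  show ?thesis by (rule exI[of _ d], rule exI[of _ P], intro conjI d1 tP ch)
qed


end
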